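(* Let $n$ be even, $c>0$, $|\lambda|<c$. Let $P_0^{(n)}$ be the Erdős–Rényi law on graphs on $\{1,\dots,n\}$ with independent edges of probability $p_n=c/n$, and $P_1^{(n)}$ the two-block stochastic block model with two fixed equally sized blocks of size $n/2$, independent edges with probability $p_n^{\mathrm{in}}=(c+\lambda)/n$ within blocks and $p_n^{\mathrm{out}}=(c-\lambda)/n$ between blocks, so that there are $N_n^{\mathrm{in}}=n^2/4-n/2$ within-block and $N_n^{\mathrm{out}}=n^2/4$ between-block pairs. Let \[\mathcal C_n:=\sup_{0\le t\le1}-\log\sum_A P_0^{(n)}(A)^{1-t}P_1^{(n)}(A)^t\] be the Chernoff information (the sum running over adjacency matrices $A$). Then \[\frac{\mathcal C_n}{n}\to J(\lambda):=\sup_{0\le t\le1}\frac14\Big[2c-c^{1-t}\big((c+\lambda)^t+(c-\lambda)^t\big)\Big].\] Moreover, as $\lambda\to0$, $J(\lambda)=\frac{\lambda^2}{16c}+O(\lambda^4/c^3)$; in particular $\mathcal C_n=J(\lambda)n+o(n)$ and $J(\lambda)=\frac14 I(\lambda)+O(\lambda^4/c^3)$, where $I(\lambda):=\frac14\big[(c+\lambda)\log\frac{c+\lambda}{c}+(c-\lambda)\log\frac{c-\lambda}{c}\big]$. *)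

theory Defs
  imports Complex_Main "HOL-Library.Landau_Symbols"
begin

text \<open>Vertex pairs of a graph on {1..n}; an unordered pair is encoded as (i,j) with i<j.
  A (simple) graph on {1..n} is a set of such pairs (its edge set), equivalently its adjacency matrix.\<close>
definition vpairs :: "nat \<Rightarrow> (nat \<times> nat) set" where
  "vpairs n = {(i,j). 1 \<le> i \<and> i < j \<and> j \<le> n}"

definition same_block :: "nat \<Rightarrow> nat \<Rightarrow> nat \<Rightarrow> bool" where
  "same_block n i j \<longleftrightarrow> (i \<le> n div 2 \<longleftrightarrow> j \<le> n div 2)"

definition P0 :: "real \<Rightarrow> nat \<Rightarrow> (nat \<times> nat) set \<Rightarrow> real" where
  "P0 c n A = (\<Prod>e\<in>vpairs n. if e \<in> A then c / real n else 1 - c / real n)"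

definition P1 :: "real \<Rightarrow> real \<Rightarrow> nat \<Rightarrow> (nat \<times> nat) set \<Rightarrow> real" where
  "P1 c lam n A = (\<Prod>e\<in>vpairs n.
      let p = (if same_block n (fst e) (snd e) then (c + lam) / real n else (c - lam) / real n)
      in if e \<in> A then p else 1 - p)"

definition chernoff :: "real \<Rightarrow> real \<Rightarrow> nat \<Rightarrow> real" where
  "chernoff c lam n = (SUP t\<in>{0..1::real}.
      - ln (\<Sum>A\<in>Pow (vpairs n). P0 c n A powr (1 - t) * P1 c lam n A powr t))"

definition Jfun :: "real \<Rightarrow> real \<Rightarrow> real" where
  "Jfun c lam = (SUP t\<in>{0..1::real}.
      (1/4) * (2 * c - c powr (1 - t) * ((c + lam) powr t + (c - lam) powr t)))"

definition Ifun :: "real \<Rightarrow> real \<Rightarrow> real" where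
  "Ifun c lam = (1/4) * ((c + lam) * ln ((c + lam) / c) + (c - lam) * ln ((c - lam) / c))"

end

theory Submission
  imports Defs "HOL-Analysis.Analysis"
begin


lemma deriv_aux:
  fixes P a e s :: real
  assumes "1 + s > 0" "1 - s > 0"
  shows "DERIV (\<lambda>y. P * ((1+y) powr a + e * (1-y) powr a)) s :>
     P * (a * (1+s) powr (a-1) - e * a * (1-s) powr (a-1))"
  using assms
  by (auto intro!: derivative_eq_intros simp: algebra_simps)

lemma phi_taylor:
  fixes t x :: real
  assumes t: "0 \<le> t" "t \<le> 1" and x: "\<bar>x\<bar> \<le> 1/2"
  shows "\<bar>(1+x) powr t + (1-x) powr t - 2 - t*(t-1)*x^2\<bar> \<le> 8 * x^4"
proof -
  define D where "D = (\<lambda>k::nat. \<lambda>y::real. (\<Prod>i<k. (t - real i)) *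
      ((1+y) powr (t - real k) + (-1)^k * (1-y) powr (t - real k)))"
  have d0: "D 0 = (\<lambda>y. (1+y) powr t + (1-y) powr t)" by (simp add: D_def)
  have dd: "\<forall>m s. m < 4 \<and> \<bar>s\<bar> \<le> \<bar>x\<bar> \<longrightarrow> DERIV (D m) s :> D (Suc m) s"
  proof (intro allI impI)
    fix m :: nat and s :: real assume ms: "m < 4 \<and> \<bar>s\<bar> \<le> \<bar>x\<bar>"
    then have p1: "1 + s > 0" "1 - s > 0" using x by auto
    have e: "D (Suc m) s = (\<Prod>i<m. (t - real i)) * ((t - real m) * (1+s) powr (t - real m - 1) - (-1)^m * (t - real m) * (1-s) powr (t - real m - 1))"
      by (simp add: D_def algebra_simps diff_diff_add)
    have X: "DERIV (D m) s :> (\<Prod>i<m. (t - real i)) * ((t - real m) * (1+s) powr (t - real m - 1) - (-1)^m * (t - real m) * (1-s) powr (t - real m - 1))"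
      unfolding D_def by (rule deriv_aux[OF p1])
    show "DERIV (D m) s :> D (Suc m) s"
      by (subst e) (rule X)
  qed
  obtain s where s: "\<bar>s\<bar> \<le> \<bar>x\<bar>" and eq: "D 0 x = (\<Sum>m<4. D m 0 / fact m * x ^ m) + D 4 s / fact 4 * x ^ 4"
    using Maclaurin_bi_le[OF refl dd] by blast
  have sum: "(\<Sum>m<4. D m 0 / fact m * x ^ m) = 2 + t*(t-1)*x^2"
    by (simp add: D_def numeral_eq_Suc fact_numeral eval_nat_numeral)
  have sx: "\<bar>s\<bar> \<le> 1/2" using s x by linarith
  have pw: "(1+s) powr (t-4) \<le> 16" "(1-s) powr (t-4) \<le> 16"
  proof -
    have h: "(1/2::real) powr (t-4) \<le> (1/2) powr (-4)"
      by (rule powr_mono') (use t in auto)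
    have h16: "(1/2::real) powr (-4) = 16"
      by (simp add: powr_minus powr_numeral eval_nat_numeral)
    have "(1+s) powr (t-4) \<le> (1/2) powr (t-4)"
      by (rule powr_mono2') (use t sx in auto)
    then show "(1+s) powr (t-4) \<le> 16" using h h16 by linarith
    have "(1-s) powr (t-4) \<le> (1/2) powr (t-4)"
      by (rule powr_mono2') (use t sx in auto)
    then show "(1-s) powr (t-4) \<le> 16" using h h16 by linarith
  qed
  have pr: "\<bar>t*(t-1)*(t-2)*(t-3)\<bar> \<le> 6"
  proof -
    have a: "0 \<le> t*(1-t)" "t*(1-t) \<le> 1" using t by (auto intro: mult_le_one)
    have b: "0 \<le> (2-t)*(3-t)" "(2-t)*(3-t) \<le> 6" using t
      by (auto intro!: mult_mono[of "2-t" 2 "3-t" 3, simplified])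
    have "t*(t-1)*(t-2)*(t-3) = - ((t*(1-t))*((2-t)*(3-t)))" by (simp add: algebra_simps)
    moreover have "(t*(1-t))*((2-t)*(3-t)) \<le> 1 * 6"
      by (rule mult_mono) (use a b in auto)
    moreover have "0 \<le> (t*(1-t))*((2-t)*(3-t))" using a b by simp
    ultimately show ?thesis by simp
  qed
  have D4: "D 4 s = t*(t-1)*(t-2)*(t-3) * ((1+s) powr (t-4) + (1-s) powr (t-4))"
  proof -
    have "(\<Prod>i<4. t - real i) = t*(t-1)*(t-2)*(t-3)"
      by (simp add: numeral_eq_Suc algebra_simps)
    then show ?thesis by (simp add: D_def)
  qed
  have "\<bar>D 4 s\<bar> \<le> 6 * 32"
    unfolding D4 abs_mult
    by (rule mult_mono) (use pr pw in auto)
  have "(1+x) powr t + (1-x) powr t - 2 - t*(t-1)*x^2 = D 4 s / 24 * x^4"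
    using eq sum d0 by (simp add: fact_numeral)
  then have "\<bar>(1+x) powr t + (1-x) powr t - 2 - t*(t-1)*x^2\<bar> = \<bar>D 4 s / 24 * x^4\<bar>"
    by (simp only:)
  also have "\<dots> = \<bar>D 4 s\<bar> / 24 * x^4"
    by (simp add: abs_mult)
  also have "\<dots> \<le> (6*32) / 24 * x^4"
    by (intro mult_right_mono divide_right_mono) (use \<open>\<bar>D 4 s\<bar> \<le> 6 * 32\<close> in auto)
  finally show ?thesis by simp
qed


lemma psi_taylor:
  fixes x :: real
  assumes x: "\<bar>x\<bar> \<le> 1/2"
  shows "\<bar>(1+x) * ln (1+x) + (1-x) * ln (1-x) - x^2\<bar> \<le> 2 * x^4"
proof -
  define D where "D = (\<lambda>k::nat. \<lambda>y::real. (case k of 0 \<Rightarrow> (1+y) * ln (1+y) + (1-y) * ln (1-y)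
     | Suc 0 \<Rightarrow> ln (1+y) - ln (1-y) | Suc (Suc 0) \<Rightarrow> 1/(1+y) + 1/(1-y)
     | Suc (Suc (Suc 0)) \<Rightarrow> - 1/(1+y)^2 + 1/(1-y)^2 | _ \<Rightarrow> 2/(1+y)^3 + 2/(1-y)^3))"
  have d0: "D 0 = (\<lambda>y. (1+y) * ln (1+y) + (1-y) * ln (1-y))" by (simp add: D_def)
  have dd: "\<forall>m s. m < 4 \<and> \<bar>s\<bar> \<le> \<bar>x\<bar> \<longrightarrow> DERIV (D m) s :> D (Suc m) s"
  proof (intro allI impI)
    fix m :: nat and s :: real assume ms: "m < 4 \<and> \<bar>s\<bar> \<le> \<bar>x\<bar>"
    then have p1: "1 + s > 0" "1 - s > 0" using x by auto
    then have p2: "1 + s \<noteq> 0" "1 - s \<noteq> 0" by auto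
    have "m = 0 \<or> m = 1 \<or> m = 2 \<or> m = 3" using ms by auto
    then show "DERIV (D m) s :> D (Suc m) s"
    proof (elim disjE)
      assume "m = 0"
      have "DERIV (\<lambda>y. (1+y) * ln (1+y) + (1-y) * ln (1-y)) s :> ln (1+s) - ln (1-s)"
      proof -
        have h1: "DERIV (\<lambda>y. (1+y) * ln (1+y)) s :> ln (1+s) + 1"
          using p1 p2 by (auto intro!: derivative_eq_intros simp: field_simps)
        have h2: "DERIV (\<lambda>y. (1-y) * ln (1-y)) s :> - ln (1-s) - 1"
          using p1 p2 by (auto intro!: derivative_eq_intros simp: field_simps)
        show ?thesis using DERIV_add[OF h1 h2] by simp
      qed
      then show ?thesis unfolding D_def using \<open>m = 0\<close> by simp
    next
      assume "m = 1"
      then show ?thesis unfolding D_def using p1 p2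
        by (auto intro!: derivative_eq_intros simp: field_simps)
    next
      assume "m = 2"
      then show ?thesis unfolding D_def using p1 p2
        by (auto intro!: derivative_eq_intros simp: field_simps power2_eq_square)
    next
      assume "m = 3"
      have h1: "DERIV (\<lambda>y. - 1/(1+y)^2) s :> 2/(1+s)^3"
        using p1 p2 by (auto intro!: derivative_eq_intros simp: divide_simps eval_nat_numeral)
      have h2: "DERIV (\<lambda>y. 1/(1-y)^2) s :> 2/(1-s)^3"
        using p1 p2 by (auto intro!: derivative_eq_intros simp: divide_simps eval_nat_numeral)
      show ?thesis using DERIV_add[OF h1 h2] \<open>m = 3\<close> unfolding D_def by (simp add: numeral_eq_Suc)
    qed
  qed
  obtain s where s: "\<bar>s\<bar> \<le> \<bar>x\<bar>" and eq: "D 0 x = (\<Sum>m<4. D m 0 / fact m * x ^ m) + D 4 s / fact 4 * x ^ 4"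
    using Maclaurin_bi_le[OF refl dd] by blast
  have sum: "(\<Sum>m<4. D m 0 / fact m * x ^ m) = x^2"
    by (simp add: D_def numeral_eq_Suc fact_numeral eval_nat_numeral)
  have sx: "\<bar>s\<bar> \<le> 1/2" using s x by linarith
  have b1: "2/(1+s)^3 \<le> 16" "2/(1-s)^3 \<le> 16"
  proof -
    have "(1/2::real)^3 \<le> (1+s)^3" by (rule power_mono) (use sx in auto)
    then show "2/(1+s)^3 \<le> 16" using sx by (simp add: field_simps)
    have "(1/2::real)^3 \<le> (1-s)^3" by (rule power_mono) (use sx in auto)
    then show "2/(1-s)^3 \<le> 16" using sx by (simp add: field_simps)
  qed
  have pos: "0 \<le> 2/(1+s)^3" "0 \<le> 2/(1-s)^3" using sx by auto
  have D4: "D 4 s = 2/(1+s)^3 + 2/(1-s)^3" by (simp add: D_def numeral_eq_Suc)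
  have "\<bar>D 4 s\<bar> \<le> 32" unfolding D4 using b1 pos by linarith
  have "(1+x) * ln (1+x) + (1-x) * ln (1-x) - x^2 = D 4 s / 24 * x^4"
    using eq sum d0 by (simp add: fact_numeral)
  then have "\<bar>(1+x) * ln (1+x) + (1-x) * ln (1-x) - x^2\<bar> = \<bar>D 4 s / 24 * x^4\<bar>"
    by (simp only:)
  also have "\<dots> = \<bar>D 4 s\<bar> / 24 * x^4"
    by (simp add: abs_mult)
  also have "\<dots> \<le> 32 / 24 * x^4"
    by (intro mult_right_mono divide_right_mono) (use \<open>\<bar>D 4 s\<bar> \<le> 32\<close> in auto)
  finally have "\<bar>(1+x) * ln (1+x) + (1-x) * ln (1-x) - x^2\<bar> \<le> 32 / 24 * x^4" .
  moreover have "32 / 24 * x^4 \<le> 2 * x^4" by simp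
  ultimately show ?thesis by linarith
qed


lemma g_rewrite:
  fixes c l t :: real
  assumes c: "c > 0" and l: "\<bar>l\<bar> < c"
  shows "(1/4) * (2 * c - c powr (1 - t) * ((c + l) powr t + (c - l) powr t))
    = (c/4) * (2 - ((1 + l/c) powr t + (1 - l/c) powr t))"
proof -
  have e1: "c + l = c * (1 + l/c)" "c - l = c * (1 - l/c)" using c by (auto simp: field_simps)
  have p: "1 + l/c \<ge> 0" "1 - l/c \<ge> 0" using c l by (auto simp: field_simps)
  have cc: "c powr (1 - t) * c powr t = c" using c by (simp add: powr_add[symmetric])
  have q1: "(c + l) powr t = c powr t * (1 + l/c) powr t"
    by (metis e1(1) powr_mult less_imp_le[OF c] p(1))
  have q2: "(c - l) powr t = c powr t * (1 - l/c) powr t"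
    by (metis e1(2) powr_mult less_imp_le[OF c] p(2))
  have "c powr (1 - t) * ((c + l) powr t + (c - l) powr t)
      = (c powr (1 - t) * c powr t) * ((1 + l/c) powr t + (1 - l/c) powr t)"
    unfolding q1 q2 by (simp add: algebra_simps)
  also have "\<dots> = c * ((1 + l/c) powr t + (1 - l/c) powr t)" by (simp only: cc)
  finally have X: "c powr (1 - t) * ((c + l) powr t + (c - l) powr t) = c * ((1 + l/c) powr t + (1 - l/c) powr t)" .
  show ?thesis unfolding X by (simp add: algebra_simps)
qed

lemma J_bound:
  fixes c l :: real
  assumes c: "c > 0" and l: "\<bar>l\<bar> \<le> c/2"
  shows "\<bar>Jfun c l - l^2/(16*c)\<bar> \<le> 2 * (l^4/c^3)"
proof -
  define x where "x = l / c"
  have x: "\<bar>x\<bar> \<le> 1/2" using c l by (simp add: x_def abs_divide field_simps)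
  have l': "\<bar>l\<bar> < c" using c l by linarith
  define g where "g = (\<lambda>t. (1/4) * (2 * c - c powr (1 - t) * ((c + l) powr t + (c - l) powr t)))"
  have gx: "g t = (c/4) * (2 - ((1 + x) powr t + (1 - x) powr t))" for t
    unfolding g_def x_def by (rule g_rewrite[OF c l'])
  have up: "g t \<le> c * x^2 / 16 + 2 * c * x^4" if t: "t \<in> {0..1}" for t
  proof -
    have "\<bar>(1+x) powr t + (1-x) powr t - 2 - t*(t-1)*x^2\<bar> \<le> 8 * x^4"
      using phi_taylor[of t x] t x by auto
    moreover have "t*(1-t) \<le> 1/4"
    proof -
      have "0 \<le> (t - 1/2)^2" by simp
      then show ?thesis by (simp add: power2_eq_square algebra_simps)
    qed
    moreover have "0 \<le> x^2" by simp
    ultimately have "t*(1-t)*x^2 \<le> 1/4 * x^2" by (intro mult_right_mono)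
    moreover have "t*(t-1)*x^2 = - (t*(1-t)*x^2)" by (simp add: algebra_simps)
    ultimately have "2 - ((1 + x) powr t + (1 - x) powr t) \<le> x^2/4 + 8 * x^4"
      using \<open>\<bar>(1+x) powr t + (1-x) powr t - 2 - t*(t-1)*x^2\<bar> \<le> 8 * x^4\<close>
      by (simp add: abs_le_iff)
    then have "(c/4) * (2 - ((1 + x) powr t + (1 - x) powr t)) \<le> (c/4) * (x^2/4 + 8 * x^4)"
      using c by (intro mult_left_mono) auto
    then show ?thesis unfolding gx by (simp add: algebra_simps)
  qed
  have lo: "g (1/2) \<ge> c * x^2 / 16 - 2 * c * x^4"
  proof -
    have "\<bar>(1+x) powr (1/2) + (1-x) powr (1/2) - 2 - (1/2)*(1/2-1)*x^2\<bar> \<le> 8 * x^4"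
      using phi_taylor[of "1/2" x] x by auto
    then have "2 - ((1 + x) powr (1/2) + (1 - x) powr (1/2)) \<ge> x^2/4 - 8 * x^4"
      by (simp add: abs_le_iff)
    then have "(c/4) * (2 - ((1 + x) powr (1/2) + (1 - x) powr (1/2))) \<ge> (c/4) * (x^2/4 - 8 * x^4)"
      using c by (intro mult_left_mono) auto
    then show ?thesis unfolding gx by (simp add: algebra_simps)
  qed
  have J: "Jfun c l = (SUP t\<in>{0..1}. g t)" unfolding Jfun_def g_def by simp
  have bdd: "bdd_above (g ` {0..1})" using up by (intro bdd_aboveI2) 
  have J1: "Jfun c l \<le> c * x^2 / 16 + 2 * c * x^4"
    unfolding J by (rule cSUP_least) (use up in auto)
  have J2: "Jfun c l \<ge> c * x^2 / 16 - 2 * c * x^4"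
    unfolding J using lo cSUP_upper[OF _ bdd, of "1/2"] by auto
  have e1: "c * x^2 / 16 = l^2/(16*c)" using c by (simp add: x_def power2_eq_square field_simps)
  have e2: "c * x^4 = l^4/c^3" using c by (simp add: x_def field_simps eval_nat_numeral)
  show ?thesis using J1 J2 e1 e2 by (simp add: abs_le_iff)
qed

lemma I_bound:
  fixes c l :: real
  assumes c: "c > 0" and l: "\<bar>l\<bar> \<le> c/2"
  shows "\<bar>Ifun c l / 4 - l^2/(16*c)\<bar> \<le> (l^4/c^3)"
proof -
  define x where "x = l / c"
  have x: "\<bar>x\<bar> \<le> 1/2" using c l by (simp add: x_def abs_divide field_simps)
  have e0: "c + l = c * (1 + x)" "c - l = c * (1 - x)" "(c+l)/c = 1 + x" "(c-l)/c = 1 - x"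
    using c by (auto simp: x_def field_simps)
  have If: "Ifun c l / 4 = (c/16) * ((1+x) * ln (1+x) + (1-x) * ln (1-x))"
    unfolding Ifun_def e0(3) e0(4) unfolding e0(1) e0(2) by (simp add: field_simps)
  have e1: "c * x^2 / 16 = l^2/(16*c)" using c by (simp add: x_def power2_eq_square field_simps)
  have e2: "c * x^4 = l^4/c^3" using c by (simp add: x_def field_simps eval_nat_numeral)
  have "\<bar>Ifun c l / 4 - c * x^2 / 16\<bar> = (c/16) * \<bar>(1+x) * ln (1+x) + (1-x) * ln (1-x) - x^2\<bar>"
  proof -
    have "Ifun c l / 4 - c * x^2 / 16 = (c/16) * ((1+x) * ln (1+x) + (1-x) * ln (1-x) - x^2)"
      unfolding If by (simp add: algebra_simps)
    moreover have "\<bar>c/16\<bar> = c/16" using c by simp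
    ultimately show ?thesis by (metis abs_mult)
  qed
  also have "\<dots> \<le> (c/16) * (2 * x^4)"
    using psi_taylor[OF x] c by (intro mult_left_mono) auto
  also have "\<dots> \<le> c * x^4" using c by simp
  finally show ?thesis using e1 e2 by simp
qed



lemma amgm: 
  fixes a b t :: real
  assumes "a > 0" "b > 0" "0 \<le> t" "t \<le> 1"
  shows "a powr (1-t) * b powr t \<le> (1-t)*a + t*b"
  using Youngs_inequality_0[of "1-t" t a b] assms by simp

lemma gm_lower:
  fixes uu vv t :: real
  assumes uu: "1/2 \<le> uu" "uu \<le> 1" and vv: "1/2 \<le> vv" "vv \<le> 1" and t: "0 \<le> t" "t \<le> 1"
  shows "(1-t)*uu + t * vv - uu powr (1-t) * vv powr t \<le> 4 * (uu - vv)^2"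
proof -
  define W where "W = (1-t)*(1/uu) + t*(1/vv)"
  define A where "A = (1-t)*uu + t * vv"
  define Gv where "Gv = uu powr (1-t) * vv powr t"
  have up: "uu > 0" "vv > 0" using uu vv by auto
  have W1: "W \<ge> 1"
  proof -
    have "1/uu \<ge> 1" "1/vv \<ge> 1" using uu vv by auto
    then have "(1-t)*(1/uu) \<ge> (1-t)*1" "t * (1/vv) \<ge> t * 1" using t
      by (intro mult_left_mono; simp)+
    then show ?thesis unfolding W_def by simp
  qed
  have "(1/uu) powr (1-t) * (1/vv) powr t \<le> W"
    unfolding W_def by (rule amgm) (use up t in auto)
  then have "1 / Gv \<le> W"
    using up by (simp add: Gv_def powr_divide)
  moreover have Gp: "Gv > 0" using up by (simp add: Gv_def)
  ultimately have "1 \<le> W * Gv" by (simp add: divide_le_eq)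
  then have G: "1 / W \<le> Gv" using W1 by (simp add: divide_le_eq mult.commute)
  have AW: "A * W - 1 = t*(1-t)*((uu-vv)^2/(uu* vv))"
  proof -
    have "A * W = (1-t)*(1-t) + t*t + t*(1-t)*(uu/vv + vv/uu)"
      unfolding A_def W_def using up by (simp add: field_simps)
    moreover have "uu/vv + vv/uu = 2 + (uu-vv)^2/(uu * vv)"
      using up by (simp add: field_simps power2_eq_square)
    ultimately have "A * W = (1-t)*(1-t) + t*t + t*(1-t)*(2 + (uu-vv)^2/(uu * vv))" by simp
    moreover have "\<And>Y::real. (1-t)*(1-t) + t*t + t*(1-t)*(2 + Y) - 1 = t*(1-t)*Y"
      by (simp add: algebra_simps)
    ultimately show ?thesis by simp
  qed
  have AW0: "A*W - 1 \<ge> 0" unfolding AW using t up by simp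
  have "A - 1/W = (A*W - 1)/W" using W1 by (simp add: field_simps)
  also have "\<dots> \<le> A*W - 1"
    using AW0 W1 by (simp add: divide_le_eq mult_le_cancel_left1)
  also have "\<dots> \<le> (uu-vv)^2/(uu* vv)"
  proof -
    have "t*(1-t) \<le> 1" using t by (auto intro: mult_le_one)
    moreover have "t*(1-t) \<ge> 0" using t by simp
    ultimately have "t*(1-t)*((uu-vv)^2/(uu* vv)) \<le> 1*((uu-vv)^2/(uu* vv))"
      using up by (intro mult_right_mono) auto
    then show ?thesis unfolding AW by simp
  qed
  also have "\<dots> \<le> 4 * (uu-vv)^2"
  proof -
    have "(1/2)*(1/2) \<le> uu * vv" using uu vv by (intro mult_mono) auto
    then have "1/(uu * vv) \<le> 4" using up by (simp add: divide_le_eq)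
    then have "(uu-vv)^2 * (1/(uu * vv)) \<le> (uu-vv)^2 * 4" by (intro mult_left_mono) auto
    then show ?thesis by simp
  qed
  finally show ?thesis using G unfolding A_def Gv_def by linarith
qed

lemma ln_close:
  fixes h :: real
  assumes "1/2 \<le> h" "h \<le> 1"
  shows "0 \<le> - ln h - (1 - h)" "- ln h - (1 - h) \<le> 2 * (1-h)^2"
proof -
  have hp: "h > 0" using assms by simp
  show "0 \<le> - ln h - (1 - h)" using ln_le_minus_one[OF hp] by simp
  have "ln (1/h) \<le> 1/h - 1" using hp by (intro ln_le_minus_one) simp
  then have "- ln h \<le> 1/h - 1" using hp by (simp add: ln_div)
  moreover have "1/h - 1 - (1 - h) = (1-h)^2 / h" using hp by (simp add: field_simps power2_eq_square)
  moreover have "(1-h)^2 / h \<le> 2 * (1-h)^2"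
  proof -
    have "(1-h)^2 * 1 \<le> (1-h)^2 * (2*h)" using assms by (intro mult_left_mono) auto
    then show ?thesis using hp by (simp add: divide_le_eq algebra_simps)
  qed
  ultimately show "- ln h - (1 - h) \<le> 2 * (1-h)^2" by linarith
qed


lemma pair_bound:
  fixes c a n t :: real
  assumes c: "c > 0" and a: "a > 0" "a \<le> 2*c" "\<bar>a - c\<bar> \<le> c"
    and n: "n \<ge> 4*c + 8*c^2 + 1" and t: "0 \<le> t" "t \<le> 1"
  defines "h \<equiv> (c/n) powr (1-t) * (a/n) powr t + (1 - c/n) powr (1-t) * (1 - a/n) powr t"
  shows "h > 0" "\<bar>- ln h - ((1-t)*c + t*a - c powr (1-t) * a powr t)/n\<bar>
      \<le> (4*c^2 + 2*(2*c+4*c^2)^2) / n^2"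
proof -
  define q where "q = c/n"
  define p where "p = a/n"
  have c2: "0 \<le> c^2" by simp
  have n0: "n > 0" "n \<ge> 1" "4*c \<le> n" using n c c2 by linarith+
  have qp: "q \<le> 2*c/n" "p \<le> 2*c/n" using a c n0 unfolding q_def p_def
    by (auto intro: divide_right_mono)
  have "2*c/n \<le> 1/2" using n0 by (simp add: pos_divide_le_eq)
  then have q: "0 < q" "q \<le> 1/2" and p: "0 < p" "p \<le> 1/2" using qp c a n0
    unfolding q_def p_def by auto
  define S where "S = (c/n) powr (1-t) * (a/n) powr t"
  define G where "G = (1 - c/n) powr (1-t) * (1 - a/n) powr t"
  have hSG: "h = S + G" unfolding h_def S_def G_def by simp
  have Sn: "S = c powr (1-t) * a powr t / n"
  proof -
    have "S = (c powr (1-t) * a powr t) / (n powr (1-t) * n powr t)"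
      unfolding S_def using c a n0 by (simp add: powr_divide)
    also have "n powr (1-t) * n powr t = n" using n0 by (simp add: powr_add[symmetric])
    finally show ?thesis .
  qed
  define D where "D = (1-t)*q + t*p - S"
  define R where "R = (1-t)*(1-q) + t*(1-p) - G"
  have D0: "0 \<le> D" using amgm[of q p t] q p t unfolding D_def S_def q_def p_def by simp
  have D1: "D \<le> 2*c/n"
  proof -
    have "(1-t)*q + t*p \<le> (1-t)*(2*c/n) + t*(2*c/n)"
      using qp t by (intro add_mono mult_left_mono) auto
    moreover have "(1-t)*(2*c/n) + t*(2*c/n) = 2*c/n" by (simp only: distrib_right[symmetric]) simp
    moreover have "S \<ge> 0" unfolding S_def by simp
    ultimately show ?thesis unfolding D_def by linarith
  qed
  have R0: "0 \<le> R" using amgm[of "1-q" "1-p" t] q p t unfolding R_def G_def q_def p_def by simp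
  have R1: "R \<le> 4*c^2/n^2"
  proof -
    have "R \<le> 4 * ((1-q) - (1-p))^2"
      using gm_lower[of "1-q" "1-p" t] q p t unfolding R_def G_def q_def p_def by simp
    also have "((1-q) - (1-p))^2 = (a - c)^2 / n^2" unfolding q_def p_def using n0
      by (simp add: field_simps power2_eq_square)
    also have "\<bar>a - c\<bar>^2 \<le> c^2" using a(3) by (intro power_mono) auto
    then have "(a - c)^2 \<le> c^2" by simp
    then have "(a - c)^2 / n^2 \<le> c^2/n^2" by (simp add: divide_right_mono)
    finally show ?thesis by simp
  qed
  have hDR: "1 - h = D + R" unfolding hSG D_def R_def by (simp add: algebra_simps)
  define K0 where "K0 = 2*c+4*c^2"
  have DR: "D + R \<le> K0 / n"
  proof -
    have "4*c^2/n^2 \<le> 4*c^2/n" using n0 c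
      by (intro divide_left_mono) (auto simp: power2_eq_square)
    then show ?thesis using D1 R1 unfolding K0_def by (simp add: add_divide_distrib)
  qed
  have "K0 \<le> 1/2 * n" using n unfolding K0_def by simp
  then have K0n: "K0 / n \<le> 1/2" using n0 by (simp add: pos_divide_le_eq)
  have h1: "1/2 \<le> h" "h \<le> 1" using hDR DR K0n D0 R0 by linarith+
  then show "h > 0" by simp
  have L: "0 \<le> - ln h - (D + R)" "- ln h - (D + R) \<le> 2 * (D + R)^2"
    using ln_close[OF h1] unfolding hDR by auto
  have DRsq: "(D + R)^2 \<le> (K0/n)^2" using DR D0 R0 by (intro power_mono) auto
  have Dn: "D = ((1-t)*c + t*a - c powr (1-t) * a powr t)/n"
    unfolding D_def Sn q_def p_def using n0 by (simp add: field_simps)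
  have "\<bar>- ln h - D\<bar> \<le> R + 2*(D+R)^2" using L R0 by (simp add: abs_le_iff)
  also have "\<dots> \<le> 4*c^2/n^2 + 2*(K0/n)^2" using R1 DRsq by linarith
  also have "\<dots> = (4*c^2 + 2*K0^2) / n^2"
    by (simp add: power_divide add_divide_distrib)
  finally show "\<bar>- ln h - ((1-t)*c + t*a - c powr (1-t) * a powr t)/n\<bar>
      \<le> (4*c^2 + 2*(2*c+4*c^2)^2) / n^2" unfolding Dn K0_def[symmetric] .
qed



lemma finite_vpairs: "finite (vpairs n)"
proof -
  have "vpairs n \<subseteq> {1..n} \<times> {1..n}" unfolding vpairs_def by auto
  then show ?thesis by (rule finite_subset) auto
qed

lemma card_vpairs: "real (card (vpairs n)) = real n * (real n - 1) / 2"
proof (induction n)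
  case 0
  have "vpairs 0 = {}" unfolding vpairs_def by auto
  then show ?case by simp
next
  case (Suc n)
  have e: "vpairs (Suc n) = vpairs n \<union> (\<lambda>i. (i, Suc n)) ` {1..n}"
    unfolding vpairs_def by auto
  have d: "vpairs n \<inter> (\<lambda>i. (i, Suc n)) ` {1..n} = {}"
    unfolding vpairs_def by auto
  have "card (vpairs (Suc n)) = card (vpairs n) + card ((\<lambda>i. (i, Suc n)) ` {1..n})"
    unfolding e by (rule card_Un_disjoint) (use d finite_vpairs in auto)
  also have "card ((\<lambda>i. (i, Suc n)) ` {1..n}) = n"
    by (subst card_image) (auto simp: inj_on_def)
  finally have "real (card (vpairs (Suc n))) = real (card (vpairs n)) + real n" by simp
  then show ?case using Suc.IH by (simp add: field_simps)
qed

lemma out_set: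
  "vpairs (2*m) \<inter> - {e. same_block (2*m) (fst e) (snd e)} = {1..m} \<times> {m+1..2*m}"
  unfolding vpairs_def same_block_def by auto

lemma card_out: "card (vpairs (2*m) \<inter> - {e. same_block (2*m) (fst e) (snd e)}) = m * m"
  unfolding out_set by simp

lemma card_in: "real (card (vpairs (2*m) \<inter> {e. same_block (2*m) (fst e) (snd e)})) = real m * real m - real m"
proof -
  have "card (vpairs (2*m)) = card (vpairs (2*m) \<inter> {e. same_block (2*m) (fst e) (snd e)})
     + card (vpairs (2*m) - {e. same_block (2*m) (fst e) (snd e)})"
    by (rule card_Int_Diff[OF finite_vpairs])
  moreover have "vpairs (2*m) - {e. same_block (2*m) (fst e) (snd e)} = vpairs (2*m) \<inter> - {e. same_block (2*m) (fst e) (snd e)}"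
    by auto
  ultimately have "real (card (vpairs (2*m))) = real (card (vpairs (2*m) \<inter> {e. same_block (2*m) (fst e) (snd e)})) + real m * real m"
    using card_out[of m] by simp
  then show ?thesis using card_vpairs[of "2*m"] by (simp add: field_simps)
qed

lemma sum_factor:
  fixes al be :: "'a \<Rightarrow> real"
  assumes "finite V"
  shows "(\<Sum>A\<in>Pow V. \<Prod>e\<in>V. if e \<in> A then al e else be e) = (\<Prod>e\<in>V. al e + be e)"
proof -
  have "(\<Prod>e\<in>V. al e + be e) = (\<Sum>X\<in>Pow V. (\<Prod>x\<in>X. al x) * (\<Prod>x\<in>V-X. be x))"
    by (rule prod_add[OF assms])
  also have "\<dots> = (\<Sum>A\<in>Pow V. \<Prod>e\<in>V. if e \<in> A then al e else be e)"
  proof (rule sum.cong[OF refl])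
    fix X assume X: "X \<in> Pow V"
    have "(\<Prod>e\<in>V. if e \<in> X then al e else be e) = prod al (V \<inter> {x. x \<in> X}) * prod be (V \<inter> - {x. x \<in> X})"
      by (rule prod.If_cases[OF assms])
    moreover have "V \<inter> {x. x \<in> X} = X" "V \<inter> - {x. x \<in> X} = V - X" using X by auto
    ultimately show "(\<Prod>x\<in>X. al x) * (\<Prod>x\<in>V-X. be x) = (\<Prod>e\<in>V. if e \<in> X then al e else be e)"
      by simp
  qed
  finally show ?thesis by simp
qed



definition pf :: "real \<Rightarrow> real \<Rightarrow> nat \<Rightarrow> nat \<times> nat \<Rightarrow> real" where
  "pf c lam n e = (if same_block n (fst e) (snd e) then (c + lam) / real n else (c - lam) / real n)"

definition hh :: "real \<Rightarrow> real \<Rightarrow> nat \<Rightarrow> real \<Rightarrow> nat \<times> nat \<Rightarrow> real" where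
  "hh c lam n t e = (c / real n) powr (1-t) * pf c lam n e powr t + (1 - c / real n) powr (1-t) * (1 - pf c lam n e) powr t"

lemma chern_sum:
  "(\<Sum>A\<in>Pow (vpairs n). P0 c n A powr (1 - t) * P1 c lam n A powr t) = (\<Prod>e\<in>vpairs n. hh c lam n t e)"
proof -
  have "P0 c n A powr (1 - t) * P1 c lam n A powr t =
     (\<Prod>e\<in>vpairs n. if e \<in> A then (c / real n) powr (1-t) * pf c lam n e powr t
        else (1 - c / real n) powr (1-t) * (1 - pf c lam n e) powr t)" for A
  proof -
    have a: "P0 c n A powr (1 - t) = (\<Prod>e\<in>vpairs n. if e \<in> A then (c / real n) powr (1-t) else (1 - c / real n) powr (1-t))"
      unfolding P0_def prod_powr_distrib by (rule prod.cong) auto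
    have b: "P1 c lam n A powr t = (\<Prod>e\<in>vpairs n. if e \<in> A then pf c lam n e powr t else (1 - pf c lam n e) powr t)"
      unfolding P1_def prod_powr_distrib by (rule prod.cong) (auto simp: Let_def pf_def)
    show ?thesis unfolding a b prod.distrib[symmetric] by (rule prod.cong) auto
  qed
  then have "(\<Sum>A\<in>Pow (vpairs n). P0 c n A powr (1 - t) * P1 c lam n A powr t)
    = (\<Sum>A\<in>Pow (vpairs n). \<Prod>e\<in>vpairs n. if e \<in> A then (c / real n) powr (1-t) * pf c lam n e powr t
        else (1 - c / real n) powr (1-t) * (1 - pf c lam n e) powr t)" by simp
  also have "\<dots> = (\<Prod>e\<in>vpairs n. hh c lam n t e)"
    unfolding hh_def by (rule sum_factor[OF finite_vpairs])
  finally show ?thesis .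
qed

lemma per_t:
  fixes c lam t :: real and m :: nat
  assumes c: "c > 0" and lam: "\<bar>lam\<bar> < c" and n: "real (2*m) \<ge> 4*c + 8*c^2 + 1"
    and t: "0 \<le> t" "t \<le> 1"
  shows "\<bar>- ln (\<Sum>A\<in>Pow (vpairs (2*m)). P0 c (2*m) A powr (1 - t) * P1 c lam (2*m) A powr t)
     - real (2*m) * ((1/4) * (2 * c - c powr (1 - t) * ((c + lam) powr t + (c - lam) powr t)))\<bar>
     \<le> (4*c^2 + 2*(2*c+4*c^2)^2) / 2 + c"
proof -
  define nr where "nr = real (2*m)"
  define V where "V = vpairs (2*m)"
  define K where "K = 4*c^2 + 2*(2*c+4*c^2)^2"
  define d where "d = (\<lambda>a. (1-t)*c + t*a - c powr (1-t) * a powr t)"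
  define ae where "ae = (\<lambda>e::nat\<times>nat. if same_block (2*m) (fst e) (snd e) then c + lam else c - lam)"
  have c2: "0 \<le> c^2" by simp
  have nr0: "nr > 0" "nr \<ge> 1" using n c c2 unfolding nr_def by linarith+
  have m0: "real m > 0" using nr0 unfolding nr_def by simp
  have pfe: "pf c lam (2*m) e = ae e / nr" for e unfolding pf_def ae_def nr_def by simp
  have ae: "ae e > 0" "ae e \<le> 2*c" "\<bar>ae e - c\<bar> \<le> c" for e
    unfolding ae_def using lam by auto
  have hb: "hh c lam (2*m) t e > 0 \<and> \<bar>- ln (hh c lam (2*m) t e) - d (ae e) / nr\<bar> \<le> K / nr^2" for e
  proof -
    have "hh c lam (2*m) t e = (c/nr) powr (1-t) * (ae e/nr) powr t + (1 - c/nr) powr (1-t) * (1 - ae e/nr) powr t"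
      unfolding hh_def pfe nr_def by simp
    then show ?thesis using pair_bound[OF c ae(1,2,3)[of e] n[folded nr_def] t] unfolding d_def K_def
      by simp
  qed
  have S: "(\<Sum>A\<in>Pow V. P0 c (2*m) A powr (1 - t) * P1 c lam (2*m) A powr t) = (\<Prod>e\<in>V. hh c lam (2*m) t e)"
    unfolding V_def by (rule chern_sum)
  have L: "- ln (\<Prod>e\<in>V. hh c lam (2*m) t e) = (\<Sum>e\<in>V. - ln (hh c lam (2*m) t e))"
  proof -
    have hne: "\<And>e. e \<in> V \<Longrightarrow> hh c lam (2*m) t e \<noteq> 0" using hb by (metis less_irrefl)
    show ?thesis unfolding V_def using ln_prod[OF finite_vpairs hne[unfolded V_def]] by (simp add: sum_negf)
  qed
  have err: "\<bar>(\<Sum>e\<in>V. - ln (hh c lam (2*m) t e)) - (\<Sum>e\<in>V. d (ae e) / nr)\<bar> \<le> K / 2"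
  proof -
    have "\<bar>(\<Sum>e\<in>V. - ln (hh c lam (2*m) t e)) - (\<Sum>e\<in>V. d (ae e) / nr)\<bar>
        = \<bar>\<Sum>e\<in>V. (- ln (hh c lam (2*m) t e) - d (ae e) / nr)\<bar>" by (simp add: sum_subtractf)
    also have "\<dots> \<le> (\<Sum>e\<in>V. \<bar>- ln (hh c lam (2*m) t e) - d (ae e) / nr\<bar>)" by (rule sum_abs)
    also have "\<dots> \<le> (\<Sum>e\<in>V. K / nr^2)" by (rule sum_mono) (use hb in auto)
    also have "\<dots> = real (card V) * (K / nr^2)" by simp
    also have "real (card V) = nr * (nr - 1) / 2" unfolding V_def nr_def by (rule card_vpairs)
    also have "nr * (nr - 1) / 2 * (K / nr^2) \<le> K / 2"
    proof -
      have K0: "K \<ge> 0" unfolding K_def by simp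
      have "nr * (nr - 1) / 2 * (K / nr^2) = (nr - 1) / nr * (K / 2)" using nr0
        by (simp add: field_simps power2_eq_square)
      also have "\<dots> \<le> 1 * (K/2)" using nr0 K0 by (intro mult_right_mono) auto
      finally show ?thesis by simp
    qed
    finally show ?thesis .
  qed
  define Nin where "Nin = card (V \<inter> {e. same_block (2*m) (fst e) (snd e)})"
  define Nout where "Nout = card (V \<inter> - {e. same_block (2*m) (fst e) (snd e)})"
  have Nin: "real Nin = real m * real m - real m" unfolding Nin_def V_def by (rule card_in)
  have Nout: "real Nout = real m * real m" unfolding Nout_def V_def using card_out[of m] by simp
  have sumd: "(\<Sum>e\<in>V. d (ae e) / nr) = real Nin * (d (c + lam) / nr) + real Nout * (d (c - lam) / nr)"
  proof -
    have "(\<Sum>e\<in>V. d (ae e) / nr) = (\<Sum>e\<in>V. if same_block (2*m) (fst e) (snd e) then d (c + lam) / nr else d (c - lam) / nr)"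
      unfolding ae_def by (rule sum.cong) auto
    also have "\<dots> = real Nin * (d (c + lam) / nr) + real Nout * (d (c - lam) / nr)"
      unfolding Nin_def Nout_def by (subst sum.If_cases) (auto simp: V_def finite_vpairs)
    finally show ?thesis .
  qed
  have geq: "(1/4) * (2 * c - c powr (1 - t) * ((c + lam) powr t + (c - lam) powr t)) = (d (c + lam) + d (c - lam)) / 4"
    unfolding d_def by (simp add: algebra_simps)
  have key: "real Nin * (d (c + lam) / nr) + real Nout * (d (c - lam) / nr) - nr * ((d (c + lam) + d (c - lam)) / 4)
      = - d (c + lam) / 2"
    unfolding Nin Nout nr_def using m0 by (simp add: field_simps)
  have din: "\<bar>d (c + lam)\<bar> \<le> 2 * c"
  proof -
    have a: "c + lam > 0" "c + lam \<le> 2*c" using lam by auto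
    have f1: "c powr (1-t) * (c+lam) powr t \<le> (1-t)*c + t*(c+lam)" by (rule amgm) (use c a t in auto)
    have f2: "(1-t)*c + t*(c+lam) \<le> (1-t)*(2*c) + t*(2*c)"
      using a c t by (intro add_mono mult_left_mono) auto
    have f3: "(1-t)*(2*c) + t*(2*c) = 2*c" by (simp only: distrib_right[symmetric]) simp
    have f4: "c powr (1-t) * (c+lam) powr t \<ge> 0" by simp
    show ?thesis unfolding d_def abs_le_iff using f1 f2 f3 f4 c by linarith
  qed
  have "\<bar>- ln (\<Sum>A\<in>Pow V. P0 c (2*m) A powr (1 - t) * P1 c lam (2*m) A powr t)
     - nr * ((1/4) * (2 * c - c powr (1 - t) * ((c + lam) powr t + (c - lam) powr t)))\<bar>
     = \<bar>((\<Sum>e\<in>V. - ln (hh c lam (2*m) t e)) - (\<Sum>e\<in>V. d (ae e) / nr)) - d (c + lam) / 2\<bar>"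
  proof -
    have Z: "nr * ((d (c+lam) + d (c-lam))/4) = (\<Sum>e\<in>V. d (ae e) / nr) + d (c+lam)/2"
      using key sumd by linarith
    show ?thesis unfolding S L geq Z by (metis diff_diff_eq)
  qed
  also have "\<dots> \<le> K / 2 + 2 * c / 2"
  proof -
    have "\<bar>((\<Sum>e\<in>V. - ln (hh c lam (2*m) t e)) - (\<Sum>e\<in>V. d (ae e) / nr)) - d (c + lam) / 2\<bar>
       \<le> \<bar>(\<Sum>e\<in>V. - ln (hh c lam (2*m) t e)) - (\<Sum>e\<in>V. d (ae e) / nr)\<bar> + \<bar>d (c + lam) / 2\<bar>"
      by (rule abs_triangle_ineq4)
    moreover have "\<bar>d (c + lam) / 2\<bar> = \<bar>d (c + lam)\<bar> / 2" by simp
    ultimately show ?thesis using err din by linarith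
  qed
  finally show ?thesis unfolding V_def nr_def K_def by simp
qed



lemma sup_close:
  fixes F H :: "real \<Rightarrow> real" and S :: "real set" and e nr :: real
  assumes S: "S \<noteq> {}" and nr: "nr > 0" and cl: "\<And>t. t \<in> S \<Longrightarrow> \<bar>F t - nr * H t\<bar> \<le> e"
    and bdd: "\<And>t. t \<in> S \<Longrightarrow> H t \<le> B"
  shows "\<bar>(SUP t\<in>S. F t) - nr * (SUP t\<in>S. H t)\<bar> \<le> e"
proof -
  have bH: "bdd_above (H ` S)" using bdd by (intro bdd_aboveI2) auto
  have bF: "bdd_above (F ` S)"
  proof (intro bdd_aboveI2)
    fix t assume t: "t \<in> S"
    have "F t \<le> nr * H t + e" using cl[OF t] by (simp add: abs_le_iff)
    also have "\<dots> \<le> nr * B + e" using bdd[OF t] nr by simp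
    finally show "F t \<le> nr * B + e" .
  qed
  have u: "(SUP t\<in>S. F t) \<le> nr * (SUP t\<in>S. H t) + e"
  proof (rule cSUP_least[OF S])
    fix t assume t: "t \<in> S"
    have "F t \<le> nr * H t + e" using cl[OF t] by (simp add: abs_le_iff)
    also have "H t \<le> (SUP t\<in>S. H t)" by (rule cSUP_upper[OF t bH])
    then have "nr * H t + e \<le> nr * (SUP t\<in>S. H t) + e" using nr by simp
    finally show "F t \<le> nr * (SUP t\<in>S. H t) + e" .
  qed
  have "(SUP t\<in>S. H t) \<le> ((SUP t\<in>S. F t) + e) / nr"
  proof (rule cSUP_least[OF S])
    fix t assume t: "t \<in> S"
    have "nr * H t \<le> F t + e" using cl[OF t] by (simp add: abs_le_iff)
    also have "F t \<le> (SUP t\<in>S. F t)" by (rule cSUP_upper[OF t bF])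
    finally show "H t \<le> ((SUP t\<in>S. F t) + e) / nr" using nr by (simp add: field_simps)
  qed
  then have l: "nr * (SUP t\<in>S. H t) \<le> (SUP t\<in>S. F t) + e" using nr by (simp add: field_simps)
  show ?thesis using u l by (simp add: abs_le_iff)
qed

lemma chern_close:
  fixes c lam :: real and m :: nat
  assumes c: "c > 0" and lam: "\<bar>lam\<bar> < c" and n: "real (2*m) \<ge> 4*c + 8*c^2 + 1"
  shows "\<bar>chernoff c lam (2*m) - Jfun c lam * real (2*m)\<bar> \<le> (4*c^2 + 2*(2*c+4*c^2)^2) / 2 + c"
proof -
  have c2: "0 \<le> c^2" by simp
  have nr: "real (2*m) > 0" using n c c2 by linarith
  have "\<bar>chernoff c lam (2*m) - real (2*m) * Jfun c lam\<bar> \<le> (4*c^2 + 2*(2*c+4*c^2)^2) / 2 + c"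
    unfolding chernoff_def Jfun_def
  proof (rule sup_close[where B = "c/2"])
    show "{0..1::real} \<noteq> {}" by simp
    show "real (2*m) > 0" by (rule nr)
  next
    fix t :: real assume t: "t \<in> {0..1}"
    then show "\<bar>- ln (\<Sum>A\<in>Pow (vpairs (2*m)). P0 c (2*m) A powr (1 - t) * P1 c lam (2*m) A powr t)
     - real (2*m) * ((1/4) * (2 * c - c powr (1 - t) * ((c + lam) powr t + (c - lam) powr t)))\<bar>
     \<le> (4*c^2 + 2*(2*c+4*c^2)^2) / 2 + c"
      using per_t[OF c lam n] by auto
    have "0 \<le> c powr (1 - t) * ((c + lam) powr t + (c - lam) powr t)" by simp
    then show "(1/4) * (2 * c - c powr (1 - t) * ((c + lam) powr t + (c - lam) powr t)) \<le> c/2"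
      by simp
  qed
  then show ?thesis by (simp add: mult.commute)
qed

theorem lemma4p2:
  fixes c lam :: real
  assumes "c > 0" and "\<bar>lam\<bar> < c"
  shows "(\<lambda>m::nat. chernoff c lam (2 * m) / real (2 * m)) \<longlonglongrightarrow> Jfun c lam
    \<and> (\<lambda>l. Jfun c l - l ^ 2 / (16 * c)) \<in> O[at 0](\<lambda>l. l ^ 4 / c ^ 3)
    \<and> (\<lambda>m::nat. chernoff c lam (2 * m) - Jfun c lam * real (2 * m)) \<in> o(\<lambda>m. real (2 * m))
    \<and> (\<lambda>l. Jfun c l - Ifun c l / 4) \<in> O[at 0](\<lambda>l. l ^ 4 / c ^ 3)"
proof -
  note c = assms(1) and lam = assms(2)
  define B where "B = (4*c^2 + 2*(2*c+4*c^2)^2) / 2 + c"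
  define E where "E = (\<lambda>m::nat. chernoff c lam (2 * m) - Jfun c lam * real (2 * m))"
  have B0: "B \<ge> 0" unfolding B_def using c by simp
  have evE: "eventually (\<lambda>m. \<bar>E m\<bar> \<le> B) sequentially"
  proof -
    obtain N :: nat where N: "real N \<ge> 4*c + 8*c^2 + 1" using real_arch_simple by blast
    show ?thesis
    proof (rule eventually_sequentiallyI[of N])
      fix m assume "N \<le> m"
      then have "real (2*m) \<ge> 4*c + 8*c^2 + 1" using N by simp
      then show "\<bar>E m\<bar> \<le> B" unfolding E_def B_def by (rule chern_close[OF c lam])
    qed
  qed
  have P3: "E \<in> o(\<lambda>m. real (2 * m))"
  proof (rule landau_o.smallI)
    fix eps :: real assume eps: "eps > 0"
    obtain N :: nat where N: "real N \<ge> B / eps" using real_arch_simple by blast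
    have "eventually (\<lambda>m. m \<ge> N) sequentially" by (rule eventually_ge_at_top)
    then show "eventually (\<lambda>m. norm (E m) \<le> eps * norm (real (2 * m))) sequentially"
      using evE
    proof eventually_elim
      case (elim m)
      have "B \<le> eps * real N" using N eps by (simp add: field_simps)
      also have "\<dots> \<le> eps * real (2*m)" using elim(1) eps by (intro mult_left_mono) auto
      finally show ?case using elim(2) by simp
    qed
  qed
  have P1: "(\<lambda>m::nat. chernoff c lam (2 * m) / real (2 * m)) \<longlonglongrightarrow> Jfun c lam"
  proof -
    have lim0: "(\<lambda>m::nat. B / real (2*m)) \<longlonglongrightarrow> 0"
    proof -
      have "(\<lambda>m::nat. (B/2) / real m) \<longlonglongrightarrow> 0" by (rule lim_const_over_n)
      moreover have "(\<lambda>m::nat. (B/2) / real m) = (\<lambda>m::nat. B / real (2*m))" by auto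
      ultimately show ?thesis by simp
    qed
    have "(\<lambda>m::nat. chernoff c lam (2 * m) / real (2 * m) - Jfun c lam) \<longlonglongrightarrow> 0"
    proof (rule Lim_null_comparison[OF _ lim0])
      have "eventually (\<lambda>m. m \<ge> 1) sequentially" by (rule eventually_ge_at_top)
      then show "eventually (\<lambda>m. norm (chernoff c lam (2 * m) / real (2 * m) - Jfun c lam) \<le> B / real (2*m)) sequentially"
        using evE
      proof eventually_elim
        case (elim m)
        have "chernoff c lam (2 * m) / real (2 * m) - Jfun c lam = E m / real (2*m)"
          unfolding E_def using elim(1) by (simp add: field_simps)
        then show ?case using elim(1,2) by (simp add: abs_divide divide_right_mono)
      qed
    qed
    then show ?thesis by (simp add: LIM_zero_iff)
  qed
  have ev0: "eventually (\<lambda>l::real. \<bar>l\<bar> \<le> c/2) (at 0)"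
    unfolding eventually_at using c by (intro exI[of _ "c/2"]) (auto simp: dist_real_def)
  have nrm: "norm (l^4/c^3) = l^4/c^3" for l using c by simp
  have P2: "(\<lambda>l. Jfun c l - l ^ 2 / (16 * c)) \<in> O[at 0](\<lambda>l. l ^ 4 / c ^ 3)"
  proof (rule bigoI[where c = 2])
    show "eventually (\<lambda>l. norm (Jfun c l - l ^ 2 / (16 * c)) \<le> 2 * norm (l ^ 4 / c ^ 3)) (at 0)"
      using ev0 by eventually_elim (use J_bound[OF c] nrm in auto)
  qed
  have P4: "(\<lambda>l. Jfun c l - Ifun c l / 4) \<in> O[at 0](\<lambda>l. l ^ 4 / c ^ 3)"
  proof (rule bigoI[where c = 3])
    show "eventually (\<lambda>l. norm (Jfun c l - Ifun c l / 4) \<le> 3 * norm (l ^ 4 / c ^ 3)) (at 0)"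
      using ev0
    proof eventually_elim
      case (elim l)
      have a: "\<bar>Jfun c l - l^2/(16*c)\<bar> \<le> 2 * (l^4/c^3)" by (rule J_bound[OF c elim])
      have b: "\<bar>Ifun c l / 4 - l^2/(16*c)\<bar> \<le> (l^4/c^3)" by (rule I_bound[OF c elim])
      have "\<bar>Jfun c l - Ifun c l / 4\<bar> \<le> \<bar>Jfun c l - l^2/(16*c)\<bar> + \<bar>Ifun c l / 4 - l^2/(16*c)\<bar>"
        using abs_triangle_ineq4[of "Jfun c l - l^2/(16*c)" "Ifun c l / 4 - l^2/(16*c)"] by simp
      then show ?case unfolding nrm real_norm_def using a b by linarith
    qed
  qed
  show ?thesis using P1 P2 P3 P4 unfolding E_def by blast
qed

end
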